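(* Let $R=k[x_1,\dots,x_n]$ be a standard graded polynomial ring over a field $k$, $I\subseteq R$ a homogeneous ideal, and $(F_\bullet,d_\bullet)$ a homogeneous free resolution of $R/I$ with $F_0=R$. Write $F_1=F_1'\oplus Re_0$ with $e_0$ generating a free direct summand, and $d_2=d_2'+d_0$ with $d_2':F_2\to F_1'$, $d_0:F_2\to Re_0$. Let $\mathfrak a$ be a homogeneous ideal with $d_0(F_2)\subseteq\mathfrak a e_0$, and let $(G_\bullet,m_\bullet)$ be a homogeneous free resolution of $R/\mathfrak a$ with $G_0=R$. Let $K'=d_1(F_1')$, $K_0=(d_1(e_0))$ and $J=K'+\mathfrak a K_0$. Let $d_0':F_2\to R$ be $d_0$ followed by $e_0\mapsto 1$, and let $q_1:F_2\to G_1$ and $q_k:F_{k+1}\to G_k$ ($k\ge2$) be homomorphisms with $m_1q_1=d_0'$ and $m_kq_k=q_{k-1}d_{k+1}$ for $k\ge 2$. Consider the complex $T_\bullet$: $\cdots\to F_3\xrightarrow{d_3}F_2\xrightarrow{d_2'}F_1'$ (with $F_1'$ in homological degree $0$ and $F_{i}$ in degree $i-1$), and the complex $B_\bullet$: $\cdots\to G_2\xrightarrow{m_2}G_1\xrightarrow{\beta}R$, where $\beta(g)=-m_1(g)\cdot d_1(e_0)$ (with $R$ in degree $0$). Then the maps $d_1|_{F_1'}:F_1'\to R$ and $q_{i-1}:F_i\to G_{i-1}$ ($i\ge2$) form a morphism of complexes $T_\bullet\to B_\bullet$, and the mapping cone of this morphism is a free resolution of $R/J$.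
   Context: The decomposition $d_2=d_2'+d_0$ is obtained by composing $d_2$ with the projections of $F_1=F_1'\oplus Re_0$ onto its summands. The mapping cone has $R$ in homological degree $0$, $F_1'\oplus G_1$ in degree $1$, and $F_i\oplus G_i$ in degree $i\ge 2$. This mapping cone is called the trimming complex. *)

theory Defs
  imports Main "HOL-Library.Poly_Mapping" "HOL-Library.Function_Algebras"
begin

text \<open>Polynomials over the field 'k in the finitely many variables indexed by the
finite type 'v (so n = CARD('v)): finitely supported maps from monomials
(exponent vectors 'v =>0 nat) to coefficients.\<close>

type_synonym ('v, 'k) poly_ring = "('v \<Rightarrow>\<^sub>0 nat) \<Rightarrow>\<^sub>0 'k"

definition mon_deg :: "('v \<Rightarrow>\<^sub>0 nat) \<Rightarrow> nat" where
  "mon_deg m = (\<Sum>v\<in>Poly_Mapping.keys m. Poly_Mapping.lookup m v)"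

text \<open>Homogeneous of (standard) degree d; the zero polynomial is homogeneous of every degree.\<close>
definition homog :: "int \<Rightarrow> ('v, 'k::zero) poly_ring \<Rightarrow> bool" where
  "homog d p \<longleftrightarrow> (\<forall>m\<in>Poly_Mapping.keys p. int (mon_deg m) = d)"

definition is_ideal :: "'a::comm_ring_1 set \<Rightarrow> bool" where
  "is_ideal I \<longleftrightarrow> 0 \<in> I \<and> (\<forall>a\<in>I. \<forall>b\<in>I. a + b \<in> I) \<and> (\<forall>r. \<forall>a\<in>I. r * a \<in> I)"

definition ideal_gen :: "'a::comm_ring_1 set \<Rightarrow> 'a set" where
  "ideal_gen S = \<Inter>{J. is_ideal J \<and> S \<subseteq> J}"

definition ideal_sum :: "'a::comm_ring_1 set \<Rightarrow> 'a set \<Rightarrow> 'a set" where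
  "ideal_sum A B = {a + b | a b. a \<in> A \<and> b \<in> B}"

definition ideal_prod :: "'a::comm_ring_1 set \<Rightarrow> 'a set \<Rightarrow> 'a set" where
  "ideal_prod A B = ideal_gen {a * b | a b. a \<in> A \<and> b \<in> B}"

definition homog_ideal :: "('v, 'k::field) poly_ring set \<Rightarrow> bool" where
  "homog_ideal I \<longleftrightarrow> is_ideal I \<and> I = ideal_gen {p \<in> I. \<exists>d. homog d p}"

text \<open>The free module with basis indexed by the set B: finitely supported coordinate
vectors vanishing outside B.\<close>
definition fmod :: "'b set \<Rightarrow> ('b \<Rightarrow> 'a::comm_ring_1) set" where
  "fmod B = {x. finite {j. x j \<noteq> 0} \<and> (\<forall>j. j \<notin> B \<longrightarrow> x j = 0)}"

definition smult_vec :: "'a::comm_ring_1 \<Rightarrow> ('b \<Rightarrow> 'a) \<Rightarrow> ('b \<Rightarrow> 'a)" where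
  "smult_vec r x = (\<lambda>j. r * x j)"

definition basis_vec :: "'b \<Rightarrow> ('b \<Rightarrow> 'a::comm_ring_1)" where
  "basis_vec j = (\<lambda>i. if i = j then 1 else 0)"

definition lin_map :: "'b set \<Rightarrow> 'c set \<Rightarrow> (('b \<Rightarrow> 'a::comm_ring_1) \<Rightarrow> ('c \<Rightarrow> 'a)) \<Rightarrow> bool" where
  "lin_map B C f \<longleftrightarrow> (\<forall>x\<in>fmod B. f x \<in> fmod C)
     \<and> (\<forall>x\<in>fmod B. \<forall>y\<in>fmod B. f (x + y) = f x + f y)
     \<and> (\<forall>r. \<forall>x\<in>fmod B. f (smult_vec r x) = smult_vec r (f x))"

text \<open>Graded free modules: basis element j has degree (shift) degB j; a map is
homogeneous (of degree 0) if it sends each basis element to a homogeneous element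
of the same degree.\<close>
definition homog_map :: "'b set \<Rightarrow> ('b \<Rightarrow> int) \<Rightarrow> ('c \<Rightarrow> int)
     \<Rightarrow> (('b \<Rightarrow> ('v, 'k::field) poly_ring) \<Rightarrow> ('c \<Rightarrow> ('v, 'k) poly_ring)) \<Rightarrow> bool" where
  "homog_map B degB degC f \<longleftrightarrow>
     (\<forall>j\<in>B. \<forall>i. homog (degB j - degC i) (f (basis_vec j) i))"

definition is_complex :: "(nat \<Rightarrow> 'b set) \<Rightarrow> (nat \<Rightarrow> ('b \<Rightarrow> 'a::comm_ring_1) \<Rightarrow> ('b \<Rightarrow> 'a)) \<Rightarrow> bool" where
  "is_complex Bs d \<longleftrightarrow> (\<forall>j\<ge>1. lin_map (Bs j) (Bs (j - 1)) (d j))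
     \<and> (\<forall>j\<ge>2. \<forall>x\<in>fmod (Bs j). d (j - 1) (d j x) = 0)"

definition exact_at :: "(nat \<Rightarrow> 'b set) \<Rightarrow> (nat \<Rightarrow> ('b \<Rightarrow> 'a::comm_ring_1) \<Rightarrow> ('b \<Rightarrow> 'a)) \<Rightarrow> nat \<Rightarrow> bool" where
  "exact_at Bs d j \<longleftrightarrow> {x \<in> fmod (Bs j). d j x = 0} = d (Suc j) ` fmod (Bs (Suc j))"

text \<open>(Bs, d) is a free resolution of R/I with C_0 = R: C_0 is free of rank one on the
basis element z, the complex is exact in all degrees >= 1 and the image of d_1 in
C_0 = R is I (so the cokernel of d_1 is R/I).\<close>
definition free_res_quot :: "'a::comm_ring_1 set \<Rightarrow> (nat \<Rightarrow> 'b set) \<Rightarrow> (nat \<Rightarrow> ('b \<Rightarrow> 'a) \<Rightarrow> ('b \<Rightarrow> 'a)) \<Rightarrow> bool" where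
  "free_res_quot I Bs d \<longleftrightarrow> is_complex Bs d
     \<and> (\<exists>z. Bs 0 = {z} \<and> (\<lambda>x. d 1 x z) ` fmod (Bs 1) = I)
     \<and> (\<forall>j\<ge>1. exact_at Bs d j)"

definition homog_free_res_quot :: "('v, 'k::field) poly_ring set \<Rightarrow> (nat \<Rightarrow> 'b set) \<Rightarrow> (nat \<Rightarrow> 'b \<Rightarrow> int)
     \<Rightarrow> (nat \<Rightarrow> ('b \<Rightarrow> ('v, 'k) poly_ring) \<Rightarrow> ('b \<Rightarrow> ('v, 'k) poly_ring)) \<Rightarrow> bool" where
  "homog_free_res_quot I Bs dg d \<longleftrightarrow> free_res_quot I Bs d
     \<and> (\<forall>z\<in>Bs 0. dg 0 z = 0)
     \<and> (\<forall>j\<ge>1. homog_map (Bs j) (dg j) (dg (j - 1)) (d j))"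

definition chain_map :: "(nat \<Rightarrow> 'b set) \<Rightarrow> (nat \<Rightarrow> ('b \<Rightarrow> 'a::comm_ring_1) \<Rightarrow> ('b \<Rightarrow> 'a))
     \<Rightarrow> (nat \<Rightarrow> 'c set) \<Rightarrow> (nat \<Rightarrow> ('c \<Rightarrow> 'a) \<Rightarrow> ('c \<Rightarrow> 'a))
     \<Rightarrow> (nat \<Rightarrow> ('b \<Rightarrow> 'a) \<Rightarrow> ('c \<Rightarrow> 'a)) \<Rightarrow> bool" where
  "chain_map BC dC BD dD phi \<longleftrightarrow> (\<forall>j. lin_map (BC j) (BD j) (phi j))
     \<and> (\<forall>j\<ge>1. \<forall>x\<in>fmod (BC j). dD j (phi j x) = phi (j - 1) (dC j x))"

text \<open>Mapping cone of phi : C -> D: Cone_0 = D_0, Cone_j = C_(j-1) (+) D_j for j >= 1,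
with differential (t, b) |-> (- dC_(j-1) t, phi_(j-1) t + dD_j b), where dC_0 = 0.\<close>
definition cone_basis :: "(nat \<Rightarrow> 'b set) \<Rightarrow> (nat \<Rightarrow> 'c set) \<Rightarrow> nat \<Rightarrow> ('b + 'c) set" where
  "cone_basis BC BD j = (if j = 0 then Inr ` BD 0 else Inl ` BC (j - 1) \<union> Inr ` BD j)"

definition cone_diff :: "(nat \<Rightarrow> ('b \<Rightarrow> 'a::comm_ring_1) \<Rightarrow> ('b \<Rightarrow> 'a))
     \<Rightarrow> (nat \<Rightarrow> ('c \<Rightarrow> 'a) \<Rightarrow> ('c \<Rightarrow> 'a)) \<Rightarrow> (nat \<Rightarrow> ('b \<Rightarrow> 'a) \<Rightarrow> ('c \<Rightarrow> 'a))
     \<Rightarrow> nat \<Rightarrow> (('b + 'c) \<Rightarrow> 'a) \<Rightarrow> (('b + 'c) \<Rightarrow> 'a)" where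
  "cone_diff dC dD phi j x = (\<lambda>s. case s of
       Inl i \<Rightarrow> (if j \<le> 1 then 0 else - dC (j - 1) (x \<circ> Inl) i)
     | Inr k \<Rightarrow> (if j = 0 then 0 else phi (j - 1) (x \<circ> Inl) k + dD j (x \<circ> Inr) k))"

text \<open>Data: resolution F with basis sets BF, differentials d, chosen basis element
e0 of F_1 (so F_1' is spanned by the other basis elements), the basis element zF of
F_0 = R; resolution G with basis sets BG, differentials m, zG the basis element of G_0 = R.\<close>

text \<open>T: T_0 = F_1', T_j = F_(j+1); differential T_1 = F_2 -> F_1' is d_2' (d_2 followed
by the projection onto F_1'), and T_j -> T_(j-1) is d_(j+1) for j >= 2.\<close>
definition T_basis :: "(nat \<Rightarrow> 'b set) \<Rightarrow> 'b \<Rightarrow> nat \<Rightarrow> 'b set" where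
  "T_basis BF e0 j = (if j = 0 then BF 1 - {e0} else BF (Suc j))"

definition T_diff :: "(nat \<Rightarrow> ('b \<Rightarrow> 'a::comm_ring_1) \<Rightarrow> ('b \<Rightarrow> 'a)) \<Rightarrow> 'b
     \<Rightarrow> nat \<Rightarrow> ('b \<Rightarrow> 'a) \<Rightarrow> ('b \<Rightarrow> 'a)" where
  "T_diff d e0 j x = (if j = 1 then (d 2 x)(e0 := 0) else d (Suc j) x)"

definition B_diff :: "(nat \<Rightarrow> ('b \<Rightarrow> 'a::comm_ring_1) \<Rightarrow> ('b \<Rightarrow> 'a)) \<Rightarrow> 'b \<Rightarrow> 'b
     \<Rightarrow> (nat \<Rightarrow> ('c \<Rightarrow> 'a) \<Rightarrow> ('c \<Rightarrow> 'a)) \<Rightarrow> nat \<Rightarrow> ('c \<Rightarrow> 'a) \<Rightarrow> ('c \<Rightarrow> 'a)" where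
  "B_diff d e0 zF m j g = (if j = 1 then (\<lambda>w. - (m 1 g w * d 1 (basis_vec e0) zF)) else m j g)"

text \<open>The maps T -> B: d_1 restricted to F_1' (landing in R = G_0) in degree 0, and
q_(i-1) : F_i -> G_(i-1), i.e. q_j on T_j = F_(j+1), in degrees j >= 1.\<close>
definition TB_map :: "(nat \<Rightarrow> ('b \<Rightarrow> 'a::comm_ring_1) \<Rightarrow> ('b \<Rightarrow> 'a)) \<Rightarrow> 'b \<Rightarrow> 'c
     \<Rightarrow> (nat \<Rightarrow> ('b \<Rightarrow> 'a) \<Rightarrow> ('c \<Rightarrow> 'a)) \<Rightarrow> nat \<Rightarrow> ('b \<Rightarrow> 'a) \<Rightarrow> ('c \<Rightarrow> 'a)" where
  "TB_map d zF zG q j x = (if j = 0 then (\<lambda>w. if w = zG then d 1 x zF else 0) else q j x)"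

end

theory Submission
  imports Defs
begin

lemma fmod_zero[simp]: "0 \<in> fmod B"
  by (simp add: fmod_def)

lemma fmod_add: "x \<in> fmod B \<Longrightarrow> y \<in> fmod B \<Longrightarrow> x + y \<in> fmod B"
  unfolding fmod_def
  by (auto intro: finite_subset[of _ "{j. x j \<noteq> 0} \<union> {j. y j \<noteq> 0}"])

lemma fmod_smult: "x \<in> fmod B \<Longrightarrow> smult_vec r x \<in> fmod B"
  unfolding fmod_def smult_vec_def
  by (auto intro: finite_subset[of _ "{j. x j \<noteq> 0}"])

lemma smult_neg1: "smult_vec (-1) x = - x"
  by (simp add: smult_vec_def fun_eq_iff)

lemma fmod_uminus: "x \<in> fmod B \<Longrightarrow> - x \<in> fmod B"
  using fmod_smult[of x B "-1"] by (simp add: smult_neg1)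

lemma fmod_diff: "x \<in> fmod B \<Longrightarrow> y \<in> fmod B \<Longrightarrow> x - y \<in> fmod B"
proof -
  assume a: "x \<in> fmod B" "y \<in> fmod B"
  have "x - y = x + (- y)" by simp
  then show ?thesis using fmod_add[OF a(1) fmod_uminus[OF a(2)]] by simp
qed

lemma fmod_mono: "A \<subseteq> B \<Longrightarrow> x \<in> fmod A \<Longrightarrow> x \<in> fmod B"
  unfolding fmod_def by auto

lemma fmod_out: "x \<in> fmod B \<Longrightarrow> j \<notin> B \<Longrightarrow> x j = 0"
  unfolding fmod_def by auto

lemma fmod_single: "v \<in> fmod {z} \<Longrightarrow> w \<noteq> z \<Longrightarrow> v w = 0"
  unfolding fmod_def by auto

lemma fmod_single_eq0: "v \<in> fmod {z} \<Longrightarrow> v z = 0 \<Longrightarrow> v = 0"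
  using fmod_single[of v z] by (metis ext zero_fun_apply)

lemma basis_vec_fmod: "j \<in> B \<Longrightarrow> basis_vec j \<in> fmod B"
  unfolding fmod_def basis_vec_def by auto

lemma lin_in: "lin_map B C f \<Longrightarrow> x \<in> fmod B \<Longrightarrow> f x \<in> fmod C"
  unfolding lin_map_def by auto

lemma lin_add: "lin_map B C f \<Longrightarrow> x \<in> fmod B \<Longrightarrow> y \<in> fmod B \<Longrightarrow> f (x + y) = f x + f y"
  unfolding lin_map_def by auto

lemma lin_smult: "lin_map B C f \<Longrightarrow> x \<in> fmod B \<Longrightarrow> f (smult_vec r x) = smult_vec r (f x)"
  unfolding lin_map_def by auto

lemma lin_uminus: "lin_map B C f \<Longrightarrow> x \<in> fmod B \<Longrightarrow> f (- x) = - f x"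
  using lin_smult[of B C f x "-1"] by (simp add: smult_neg1)

lemma lin_diff: "lin_map B C f \<Longrightarrow> x \<in> fmod B \<Longrightarrow> y \<in> fmod B \<Longrightarrow> f (x - y) = f x - f y"
proof -
  assume a: "lin_map B C f" "x \<in> fmod B" "y \<in> fmod B"
  have "f (x + - y) = f x + - f y"
    using lin_add[OF a(1) a(2) fmod_uminus[OF a(3)]] lin_uminus[OF a(1) a(3)] by simp
  then show ?thesis by simp
qed

lemma lin_zero: "lin_map B C f \<Longrightarrow> f 0 = 0"
proof -
  assume a: "lin_map B C f"
  have "f (0 + 0) = f 0 + f 0" using lin_add[OF a fmod_zero fmod_zero] .
  then show ?thesis by simp
qed

lemma lin_mono: "lin_map B C f \<Longrightarrow> A \<subseteq> B \<Longrightarrow> lin_map A C f"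
  unfolding lin_map_def using fmod_mono by blast

definition vjoin :: "('b \<Rightarrow> 'a) \<Rightarrow> ('c \<Rightarrow> 'a) \<Rightarrow> ('b + 'c \<Rightarrow> 'a)" where
  "vjoin t b = (\<lambda>s. case s of Inl i \<Rightarrow> t i | Inr k \<Rightarrow> b k)"

lemma vjoin_Inl[simp]: "vjoin t b (Inl i) = t i" and vjoin_Inr[simp]: "vjoin t b (Inr k) = b k"
  by (simp_all add: vjoin_def)

lemma vjoin_comp[simp]: "vjoin t b \<circ> Inl = t" "vjoin t b \<circ> Inr = b"
  by (auto simp: fun_eq_iff)

lemma vjoin_split: "vjoin (x \<circ> Inl) (x \<circ> Inr) = x"
  by (auto simp: fun_eq_iff vjoin_def split: sum.split)

lemma fmod_sum_iff:
  "x \<in> fmod (Inl ` A \<union> Inr ` B) \<longleftrightarrow> x \<circ> Inl \<in> fmod A \<and> x \<circ> Inr \<in> fmod B"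
proof
  assume x: "x \<in> fmod (Inl ` A \<union> Inr ` B)"
  have f: "finite {j. x j \<noteq> 0}" using x by (simp add: fmod_def)
  have "finite {i. (x \<circ> Inl) i \<noteq> 0}"
    using finite_vimageI[OF f, of Inl] by (simp add: vimage_def)
  moreover have "finite {i. (x \<circ> Inr) i \<noteq> 0}"
    using finite_vimageI[OF f, of Inr] by (simp add: vimage_def)
  ultimately show "x \<circ> Inl \<in> fmod A \<and> x \<circ> Inr \<in> fmod B"
    using x by (auto simp: fmod_def)
next
  assume h: "x \<circ> Inl \<in> fmod A \<and> x \<circ> Inr \<in> fmod B"
  have "{j. x j \<noteq> 0} \<subseteq> Inl ` {i. (x \<circ> Inl) i \<noteq> 0} \<union> Inr ` {i. (x \<circ> Inr) i \<noteq> 0}"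
    by (auto simp: image_iff split: sum.split) (metis sum.exhaust)
  then have "finite {j. x j \<noteq> 0}"
    using h by (auto simp: fmod_def intro: finite_subset)
  moreover have "\<forall>j. j \<notin> Inl ` A \<union> Inr ` B \<longrightarrow> x j = 0"
  proof (intro allI impI)
    fix j assume "j \<notin> Inl ` A \<union> Inr ` B"
    then show "x j = 0" using h by (cases j) (auto simp: fmod_def)
  qed
  ultimately show "x \<in> fmod (Inl ` A \<union> Inr ` B)" by (simp add: fmod_def)
qed

lemma fmod_vjoin: "vjoin t b \<in> fmod (Inl ` A \<union> Inr ` B) \<longleftrightarrow> t \<in> fmod A \<and> b \<in> fmod B"
  by (simp add: fmod_sum_iff)

lemma fmod_empty: "x \<in> fmod {} \<longleftrightarrow> x = 0"
  by (auto simp: fmod_def fun_eq_iff)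

lemma cone_basis_alt:
  "cone_basis BC BD j = Inl ` (if j = 0 then {} else BC (j - 1)) \<union> Inr ` BD j"
  by (simp add: cone_basis_def)

lemma cone_diff_eq:
  assumes "j \<ge> 1"
  shows "cone_diff dC dD phi j x =
     vjoin (if j \<le> 1 then 0 else - dC (j - 1) (x \<circ> Inl)) (phi (j - 1) (x \<circ> Inl) + dD j (x \<circ> Inr))"
  using assms by (auto simp: cone_diff_def fun_eq_iff split: sum.split)


lemma comp_plus: "(x + y) \<circ> f = (x \<circ> f) + (y \<circ> f)"
  by (simp add: fun_eq_iff)
lemma comp_smult: "smult_vec r x \<circ> f = smult_vec r (x \<circ> f)"
  by (simp add: fun_eq_iff smult_vec_def)
lemma vjoin_add: "vjoin a b + vjoin c d = vjoin (a + c) (b + d)"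
  by (simp add: fun_eq_iff vjoin_def split: sum.split)
lemma vjoin_smult: "smult_vec r (vjoin a b) = vjoin (smult_vec r a) (smult_vec r b)"
  by (simp add: fun_eq_iff vjoin_def smult_vec_def split: sum.split)
lemma vjoin_zero: "vjoin 0 0 = 0"
  by (simp add: fun_eq_iff vjoin_def split: sum.split)
lemma vjoin_eq0: "vjoin a b = 0 \<longleftrightarrow> a = 0 \<and> b = 0"
  by (auto simp: fun_eq_iff vjoin_def split: sum.split)

lemma smult_uminus: "smult_vec r (- x) = - smult_vec r x"
  by (simp add: fun_eq_iff smult_vec_def)
lemma smult_zero: "smult_vec r 0 = 0"
  by (simp add: fun_eq_iff smult_vec_def)
lemma smult_add: "smult_vec r (x + y) = smult_vec r x + smult_vec r y"
  by (simp add: fun_eq_iff smult_vec_def algebra_simps)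

lemma cone_fmod:
  "x \<in> fmod (cone_basis BC BD (Suc i)) \<longleftrightarrow> x \<circ> Inl \<in> fmod (BC i) \<and> x \<circ> Inr \<in> fmod (BD (Suc i))"
  by (simp add: cone_basis_alt fmod_sum_iff)

lemma cone_fmod0:
  "x \<in> fmod (cone_basis BC BD 0) \<longleftrightarrow> x \<circ> Inl = 0 \<and> x \<circ> Inr \<in> fmod (BD 0)"
  using fmod_sum_iff[of x "{}" "BD 0"] by (simp add: cone_basis_def fmod_empty)

lemma cx_lin: "is_complex B d \<Longrightarrow> lin_map (B (Suc j)) (B j) (d (Suc j))"
proof -
  assume "is_complex B d"
  then have "\<forall>j\<ge>1. lin_map (B j) (B (j - 1)) (d j)" by (simp add: is_complex_def)
  from this[rule_format, of "Suc j"] show ?thesis by simp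
qed

lemma cx_sq: "is_complex B d \<Longrightarrow> x \<in> fmod (B (Suc (Suc j))) \<Longrightarrow> d (Suc j) (d (Suc (Suc j)) x) = 0"
proof -
  assume "is_complex B d" "x \<in> fmod (B (Suc (Suc j)))"
  then have "\<forall>j\<ge>2. \<forall>x\<in>fmod (B j). d (j - 1) (d j x) = 0" by (simp add: is_complex_def)
  from this[rule_format, of "Suc (Suc j)" x] \<open>x \<in> _\<close> show ?thesis by simp
qed

lemma cone_lin:
  assumes cC: "is_complex BC dC" and cD: "is_complex BD dD" and ch: "chain_map BC dC BD dD phi"
  shows "lin_map (cone_basis BC BD (Suc i)) (cone_basis BC BD i) (cone_diff dC dD phi (Suc i))"
proof -
  note lC = cx_lin[OF cC] and lD = cx_lin[OF cD]
  have lP: "\<And>j. lin_map (BC j) (BD j) (phi j)" using ch by (simp add: chain_map_def)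
  have eq: "\<And>x. cone_diff dC dD phi (Suc i) x =
     vjoin (if i = 0 then 0 else - dC i (x \<circ> Inl)) (phi i (x \<circ> Inl) + dD (Suc i) (x \<circ> Inr))"
    by (subst cone_diff_eq) auto
  have inn: "cone_diff dC dD phi (Suc i) x \<in> fmod (cone_basis BC BD i)"
    if x: "x \<in> fmod (cone_basis BC BD (Suc i))" for x
  proof -
    have t: "x \<circ> Inl \<in> fmod (BC i)" and b: "x \<circ> Inr \<in> fmod (BD (Suc i))" using x cone_fmod by auto
    have B1: "phi i (x \<circ> Inl) + dD (Suc i) (x \<circ> Inr) \<in> fmod (BD i)"
      using fmod_add[OF lin_in[OF lP t] lin_in[OF lD b]] by simp
    show ?thesis
    proof (cases i)
      case 0
      then show ?thesis using B1 unfolding eq by (simp add: cone_fmod0)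
    next
      case (Suc i')
      have "dC i (x \<circ> Inl) \<in> fmod (BC i')" using lin_in[OF lC, of "x \<circ> Inl" i'] t Suc by simp
      then show ?thesis using B1 Suc unfolding eq by (simp add: cone_fmod fmod_uminus)
    qed
  qed
  have add: "cone_diff dC dD phi (Suc i) (x + y) = cone_diff dC dD phi (Suc i) x + cone_diff dC dD phi (Suc i) y"
    if x: "x \<in> fmod (cone_basis BC BD (Suc i))" and y: "y \<in> fmod (cone_basis BC BD (Suc i))" for x y
  proof -
    have t: "x \<circ> Inl \<in> fmod (BC i)" and b: "x \<circ> Inr \<in> fmod (BD (Suc i))" using x cone_fmod by auto
    have t': "y \<circ> Inl \<in> fmod (BC i)" and b': "y \<circ> Inr \<in> fmod (BD (Suc i))" using y cone_fmod by auto
    show ?thesis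
      unfolding eq vjoin_add comp_plus
      using lin_add[OF lP t t'] lin_add[OF lD b b'] lin_add[OF lC, of "x \<circ> Inl" "i - 1" "y \<circ> Inl"] t t'
      by (cases i) (auto simp: algebra_simps)
  qed
  have sm: "cone_diff dC dD phi (Suc i) (smult_vec r x) = smult_vec r (cone_diff dC dD phi (Suc i) x)"
    if x: "x \<in> fmod (cone_basis BC BD (Suc i))" for x r
  proof -
    have t: "x \<circ> Inl \<in> fmod (BC i)" and b: "x \<circ> Inr \<in> fmod (BD (Suc i))" using x cone_fmod by auto
    show ?thesis
      unfolding eq vjoin_smult comp_smult
      using lin_smult[OF lP t] lin_smult[OF lD b] lin_smult[OF lC, of "x \<circ> Inl" "i - 1"] t
      by (cases i) (auto simp: smult_uminus smult_add smult_zero)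
  qed
  show ?thesis unfolding lin_map_def using inn add sm by blast
qed

lemma cone_sq:
  assumes cC: "is_complex BC dC" and cD: "is_complex BD dD" and ch: "chain_map BC dC BD dD phi"
    and x: "x \<in> fmod (cone_basis BC BD (Suc (Suc i)))"
  shows "cone_diff dC dD phi (Suc i) (cone_diff dC dD phi (Suc (Suc i)) x) = 0"
proof -
  have lC: "\<And>j. j \<ge> 1 \<Longrightarrow> lin_map (BC j) (BC (j - 1)) (dC j)" using cC by (simp add: is_complex_def)
  have sC: "\<And>j x. j \<ge> 2 \<Longrightarrow> x \<in> fmod (BC j) \<Longrightarrow> dC (j - 1) (dC j x) = 0" using cC by (simp add: is_complex_def)
  have lD: "\<And>j. j \<ge> 1 \<Longrightarrow> lin_map (BD j) (BD (j - 1)) (dD j)" using cD by (simp add: is_complex_def)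
  have sD: "\<And>j x. j \<ge> 2 \<Longrightarrow> x \<in> fmod (BD j) \<Longrightarrow> dD (j - 1) (dD j x) = 0" using cD by (simp add: is_complex_def)
  have lP: "\<And>j. lin_map (BC j) (BD j) (phi j)" using ch by (simp add: chain_map_def)
  have cm: "\<And>j x. j \<ge> 1 \<Longrightarrow> x \<in> fmod (BC j) \<Longrightarrow> dD j (phi j x) = phi (j - 1) (dC j x)"
    using ch by (simp add: chain_map_def)
  have eq: "\<And>x j. cone_diff dC dD phi (Suc j) x =
     vjoin (if j = 0 then 0 else - dC j (x \<circ> Inl)) (phi j (x \<circ> Inl) + dD (Suc j) (x \<circ> Inr))"
    by (subst cone_diff_eq) auto
  define t where "t = x \<circ> Inl"
  define b where "b = x \<circ> Inr"
  have t: "t \<in> fmod (BC (Suc i))" and b: "b \<in> fmod (BD (Suc (Suc i)))" using x cone_fmod t_def b_def by auto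
  have dt: "dC (Suc i) t \<in> fmod (BC i)" using lin_in[OF lC t] by simp
  have pt: "phi (Suc i) t \<in> fmod (BD (Suc i))" using lin_in[OF lP t] .
  have db: "dD (Suc (Suc i)) b \<in> fmod (BD (Suc i))" using lin_in[OF lD b] by simp
  have A: "(if i = 0 then 0 else - dC i (- dC (Suc i) t)) = 0"
  proof (cases i)
    case (Suc i')
    have "dC i (- dC (Suc i) t) = - dC i (dC (Suc i) t)" using lin_uminus[OF lC dt] Suc by simp
    moreover have "dC i (dC (Suc i) t) = 0" using sC[of "Suc i" t] t Suc by simp
    ultimately show ?thesis by simp
  qed simp
  have B: "phi i (- dC (Suc i) t) + dD (Suc i) (phi (Suc i) t + dD (Suc (Suc i)) b) = 0"
  proof -
    have "phi i (- dC (Suc i) t) = - phi i (dC (Suc i) t)" using lin_uminus[OF lP dt] .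
    moreover have "dD (Suc i) (phi (Suc i) t + dD (Suc (Suc i)) b) = dD (Suc i) (phi (Suc i) t) + dD (Suc i) (dD (Suc (Suc i)) b)"
      using lin_add[OF lD pt db] by simp
    moreover have "dD (Suc i) (phi (Suc i) t) = phi i (dC (Suc i) t)" using cm[of "Suc i" t] t by simp
    moreover have "dD (Suc i) (dD (Suc (Suc i)) b) = 0" using sD[of "Suc (Suc i)" b] b by simp
    ultimately show ?thesis by simp
  qed
  show ?thesis
    apply (subst eq[of "Suc i"])
    apply (subst eq)
    using A B by (cases "i = 0") (simp_all add: t_def[symmetric] b_def[symmetric] vjoin_zero)
qed

lemma cone_complex:
  assumes cC: "is_complex BC dC" and cD: "is_complex BD dD" and ch: "chain_map BC dC BD dD phi"
  shows "is_complex (cone_basis BC BD) (cone_diff dC dD phi)"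
  unfolding is_complex_def
  apply (intro conjI allI impI ballI)
  subgoal for j
  proof -
    assume "j \<ge> 1"
    then obtain i where "j = Suc i" by (cases j) auto
    then show ?thesis using cone_lin[OF assms, of i] by simp
  qed
  subgoal for j x
  proof -
    assume "j \<ge> 2" "x \<in> fmod (cone_basis BC BD j)"
    then obtain k where "j = 2 + k" using le_Suc_ex by blast
    then have "j = Suc (Suc k)" by simp
    then show ?thesis using cone_sq[OF assms, of x k] \<open>x \<in> _\<close> by simp
  qed
  done

lemma cone_exact:
  assumes cc: "is_complex (cone_basis BC BD) (cone_diff dC dD phi)"
    and H: "\<And>t b. t \<in> fmod (BC i) \<Longrightarrow> b \<in> fmod (BD (Suc i)) \<Longrightarrow> (i \<ge> 1 \<longrightarrow> dC i t = 0) \<Longrightarrow>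
         phi i t + dD (Suc i) b = 0 \<Longrightarrow>
         \<exists>t'\<in>fmod (BC (Suc i)). \<exists>b'\<in>fmod (BD (Suc (Suc i))). - dC (Suc i) t' = t \<and> phi (Suc i) t' + dD (Suc (Suc i)) b' = b"
  shows "exact_at (cone_basis BC BD) (cone_diff dC dD phi) (Suc i)"
  unfolding exact_at_def
proof
  have eq: "\<And>x j. cone_diff dC dD phi (Suc j) x =
     vjoin (if j = 0 then 0 else - dC j (x \<circ> Inl)) (phi j (x \<circ> Inl) + dD (Suc j) (x \<circ> Inr))"
    by (subst cone_diff_eq) auto
  show "{x \<in> fmod (cone_basis BC BD (Suc i)). cone_diff dC dD phi (Suc i) x = 0}
    \<subseteq> cone_diff dC dD phi (Suc (Suc i)) ` fmod (cone_basis BC BD (Suc (Suc i)))"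
  proof
    fix x assume "x \<in> {x \<in> fmod (cone_basis BC BD (Suc i)). cone_diff dC dD phi (Suc i) x = 0}"
    then have x: "x \<in> fmod (cone_basis BC BD (Suc i))" and z: "cone_diff dC dD phi (Suc i) x = 0" by auto
    have t: "x \<circ> Inl \<in> fmod (BC i)" and b: "x \<circ> Inr \<in> fmod (BD (Suc i))" using x cone_fmod by auto
    from z have z1: "(if i = 0 then 0 else - dC i (x \<circ> Inl)) = 0"
      and z2: "phi i (x \<circ> Inl) + dD (Suc i) (x \<circ> Inr) = 0"
      unfolding eq vjoin_eq0 by auto
    have "i \<ge> 1 \<longrightarrow> dC i (x \<circ> Inl) = 0" using z1 by (auto split: if_splits)
    then obtain t' b' where t': "t' \<in> fmod (BC (Suc i))" and b': "b' \<in> fmod (BD (Suc (Suc i)))"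
      and e1: "- dC (Suc i) t' = x \<circ> Inl" and e2: "phi (Suc i) t' + dD (Suc (Suc i)) b' = x \<circ> Inr"
      using H[OF t b _ z2] by blast
    have "vjoin t' b' \<in> fmod (cone_basis BC BD (Suc (Suc i)))" using t' b' by (simp add: cone_fmod)
    moreover have "cone_diff dC dD phi (Suc (Suc i)) (vjoin t' b') = x"
      unfolding eq using e1 e2 by (simp add: vjoin_split)
    ultimately show "x \<in> cone_diff dC dD phi (Suc (Suc i)) ` fmod (cone_basis BC BD (Suc (Suc i)))"
      by (metis image_eqI)
  qed
next
  show "cone_diff dC dD phi (Suc (Suc i)) ` fmod (cone_basis BC BD (Suc (Suc i)))
    \<subseteq> {x \<in> fmod (cone_basis BC BD (Suc i)). cone_diff dC dD phi (Suc i) x = 0}"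
  proof
    fix y assume "y \<in> cone_diff dC dD phi (Suc (Suc i)) ` fmod (cone_basis BC BD (Suc (Suc i)))"
    then obtain x where x: "x \<in> fmod (cone_basis BC BD (Suc (Suc i)))" and y: "y = cone_diff dC dD phi (Suc (Suc i)) x" by auto
    have "lin_map (cone_basis BC BD (Suc (Suc i))) (cone_basis BC BD (Suc i)) (cone_diff dC dD phi (Suc (Suc i)))"
      using cx_lin[OF cc] .
    then have "y \<in> fmod (cone_basis BC BD (Suc i))" using lin_in x y by blast
    moreover have "cone_diff dC dD phi (Suc i) y = 0"
      using cx_sq[OF cc x] y by simp
    ultimately show "y \<in> {x \<in> fmod (cone_basis BC BD (Suc i)). cone_diff dC dD phi (Suc i) x = 0}" by simp
  qed
qed


lemma lin_mapI:
  "(\<And>x. x \<in> fmod B \<Longrightarrow> f x \<in> fmod C) \<Longrightarrow>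
   (\<And>x y. x \<in> fmod B \<Longrightarrow> y \<in> fmod B \<Longrightarrow> f (x + y) = f x + f y) \<Longrightarrow>
   (\<And>r x. x \<in> fmod B \<Longrightarrow> f (smult_vec r x) = smult_vec r (f x)) \<Longrightarrow> lin_map B C f"
  unfolding lin_map_def by blast

lemma fmod_subsupp: "{j. y j \<noteq> 0} \<subseteq> {j. x j \<noteq> 0} \<Longrightarrow> (\<forall>j. j \<notin> C \<longrightarrow> y j = 0) \<Longrightarrow> x \<in> fmod B \<Longrightarrow> y \<in> fmod C"
  unfolding fmod_def by (auto intro: finite_subset)

lemma lin_eval:
  fixes f :: "('b \<Rightarrow> 'a::comm_ring_1) \<Rightarrow> ('c \<Rightarrow> 'a)"
  assumes f: "lin_map B C f"
  shows "lin_map B {z} (\<lambda>x w. if w = z then f x y else 0)"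
proof (rule lin_mapI)
  fix x :: "'b \<Rightarrow> 'a" assume "x \<in> fmod B"
  have "{j. (if j = z then f x y else 0) \<noteq> 0} \<subseteq> {z}" by auto
  then show "(\<lambda>w. if w = z then f x y else 0) \<in> fmod {z}"
    unfolding fmod_def by (auto intro: finite_subset)
next
  fix x x' :: "'b \<Rightarrow> 'a" assume h: "x \<in> fmod B" "x' \<in> fmod B"
  show "(\<lambda>w. if w = z then f (x + x') y else 0) = (\<lambda>w. if w = z then f x y else 0) + (\<lambda>w. if w = z then f x' y else 0)"
    using lin_add[OF f h] by (auto simp: fun_eq_iff)
next
  fix r and x :: "'b \<Rightarrow> 'a" assume h: "x \<in> fmod B"
  show "(\<lambda>w. if w = z then f (smult_vec r x) y else 0) = smult_vec r (\<lambda>w. if w = z then f x y else 0)"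
    using lin_smult[OF f h, of r] by (auto simp: fun_eq_iff smult_vec_def)
qed

lemma lin_scale:
  fixes f :: "('b \<Rightarrow> 'a::comm_ring_1) \<Rightarrow> ('c \<Rightarrow> 'a)"
  assumes f: "lin_map B C f"
  shows "lin_map B C (\<lambda>x w. - (f x w * c))"
proof (rule lin_mapI)
  fix x :: "'b \<Rightarrow> 'a" assume h: "x \<in> fmod B"
  have fx: "f x \<in> fmod C" using lin_in[OF f h] .
  show "(\<lambda>w. - (f x w * c)) \<in> fmod C"
    by (rule fmod_subsupp[OF _ _ fx]) (auto simp: fmod_out[OF fx])
next
  fix x x' :: "'b \<Rightarrow> 'a" assume h: "x \<in> fmod B" "x' \<in> fmod B"
  show "(\<lambda>w. - (f (x + x') w * c)) = (\<lambda>w. - (f x w * c)) + (\<lambda>w. - (f x' w * c))"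
    using lin_add[OF f h] by (auto simp: fun_eq_iff algebra_simps)
next
  fix r and x :: "'b \<Rightarrow> 'a" assume h: "x \<in> fmod B"
  show "(\<lambda>w. - (f (smult_vec r x) w * c)) = smult_vec r (\<lambda>w. - (f x w * c))"
    using lin_smult[OF f h, of r] by (auto simp: fun_eq_iff smult_vec_def algebra_simps)
qed

lemma lin_upd:
  fixes f :: "('b \<Rightarrow> 'a::comm_ring_1) \<Rightarrow> ('c \<Rightarrow> 'a)"
  assumes f: "lin_map B C f"
  shows "lin_map B (C - {e}) (\<lambda>x. (f x)(e := 0))"
proof (rule lin_mapI)
  fix x :: "'b \<Rightarrow> 'a" assume h: "x \<in> fmod B"
  have fx: "f x \<in> fmod C" using lin_in[OF f h] .
  show "(f x)(e := 0) \<in> fmod (C - {e})"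
    by (rule fmod_subsupp[OF _ _ fx]) (auto simp: fmod_out[OF fx])
next
  fix x x' :: "'b \<Rightarrow> 'a" assume h: "x \<in> fmod B" "x' \<in> fmod B"
  show "(f (x + x'))(e := 0) = (f x)(e := 0) + (f x')(e := 0)"
    using lin_add[OF f h] by (auto simp: fun_eq_iff)
next
  fix r and x :: "'b \<Rightarrow> 'a" assume h: "x \<in> fmod B"
  show "(f (smult_vec r x))(e := 0) = smult_vec r ((f x)(e := 0))"
    using lin_smult[OF f h, of r] by (auto simp: fun_eq_iff smult_vec_def)
qed

lemma ideal_gen_char:
  assumes "is_ideal P" "S \<subseteq> P" "\<And>J. is_ideal J \<Longrightarrow> S \<subseteq> J \<Longrightarrow> P \<subseteq> J"
  shows "ideal_gen S = P"
  using assms unfolding ideal_gen_def by blast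

lemma ideal_gen_single: "ideal_gen {c::'a::comm_ring_1} = {r * c | r. True}"
proof (rule ideal_gen_char)
  show "is_ideal {r * c | r. True}"
    unfolding is_ideal_def
    by (auto simp: algebra_simps) (metis mult_zero_left, metis distrib_right, metis mult.assoc)
  show "{c} \<subseteq> {r * c | r. True}" by (auto intro: exI[of _ 1])
  fix J assume "is_ideal J" "{c} \<subseteq> J"
  then show "{r * c | r. True} \<subseteq> J" unfolding is_ideal_def by auto
qed

lemma ideal_prod_single:
  assumes A: "is_ideal (A::'a::comm_ring_1 set)"
  shows "ideal_prod A (ideal_gen {c}) = {a * c | a. a \<in> A}"
  unfolding ideal_prod_def ideal_gen_single
proof (rule ideal_gen_char)
  have A0: "0 \<in> A" and Aa: "\<And>a b. a \<in> A \<Longrightarrow> b \<in> A \<Longrightarrow> a + b \<in> A" and Am: "\<And>r a. a \<in> A \<Longrightarrow> r * a \<in> A"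
    using A unfolding is_ideal_def by auto
  show "is_ideal {a * c | a. a \<in> A}"
    unfolding is_ideal_def
  proof (intro conjI ballI allI)
    show "0 \<in> {a * c | a. a \<in> A}" using A0 by (auto intro: exI[of _ 0])
  next
    fix x y assume "x \<in> {a * c | a. a \<in> A}" "y \<in> {a * c | a. a \<in> A}"
    then obtain a b where "x = a * c" "y = b * c" "a \<in> A" "b \<in> A" by auto
    then show "x + y \<in> {a * c | a. a \<in> A}" using Aa by (auto simp: distrib_right intro!: exI[of _ "a + b"])
  next
    fix r x assume "x \<in> {a * c | a. a \<in> A}"
    then obtain a where "x = a * c" "a \<in> A" by auto
    then show "r * x \<in> {a * c | a. a \<in> A}" using Am by (auto simp: mult.assoc intro!: exI[of _ "r * a"])
  qed
  show "{a * b | a b. a \<in> A \<and> b \<in> {r * c | r. True}} \<subseteq> {a * c | a. a \<in> A}"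
  proof
    fix x assume "x \<in> {a * b | a b. a \<in> A \<and> b \<in> {r * c | r. True}}"
    then obtain a r where "x = a * (r * c)" "a \<in> A" by auto
    then show "x \<in> {a * c | a. a \<in> A}" using Am[of a r]
      by (auto simp: mult.assoc mult.commute intro!: exI[of _ "r * a"])
  qed
  fix J assume J: "is_ideal J" "{a * b | a b. a \<in> A \<and> b \<in> {r * c | r. True}} \<subseteq> J"
  show "{a * c | a. a \<in> A} \<subseteq> J"
  proof
    fix x assume "x \<in> {a * c | a. a \<in> A}"
    then obtain a where "x = a * c" "a \<in> A" by auto
    then have "x = a * (1 * c)" by simp
    then have "x \<in> {a * b | a b. a \<in> A \<and> b \<in> {r * c | r. True}}" using \<open>a \<in> A\<close> by blast
    then show "x \<in> J" using J by auto
  qed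
qed


lemma exact_obtain:
  "exact_at B d j \<Longrightarrow> x \<in> fmod (B j) \<Longrightarrow> d j x = 0 \<Longrightarrow> \<exists>s\<in>fmod (B (Suc j)). x = d (Suc j) s"
  unfolding exact_at_def by blast

lemma is_complexI:
  "(\<And>j. lin_map (B (Suc j)) (B j) (d (Suc j))) \<Longrightarrow>
   (\<And>j x. x \<in> fmod (B (Suc (Suc j))) \<Longrightarrow> d (Suc j) (d (Suc (Suc j)) x) = 0) \<Longrightarrow> is_complex B d"
  unfolding is_complex_def
  apply (intro conjI allI impI ballI)
  subgoal for j by (cases j) auto
  subgoal for j x
  proof -
    assume a: "\<And>j x. x \<in> fmod (B (Suc (Suc j))) \<Longrightarrow> d (Suc j) (d (Suc (Suc j)) x) = 0" "2 \<le> j" "x \<in> fmod (B j)"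
    then obtain k where "j = 2 + k" using le_Suc_ex by blast
    then have "j = Suc (Suc k)" by simp
    then show ?thesis using a(1)[of x k] a(3) by simp
  qed
  done

lemma chain_mapI:
  "(\<And>j. lin_map (BC j) (BD j) (phi j)) \<Longrightarrow>
   (\<And>j x. x \<in> fmod (BC (Suc j)) \<Longrightarrow> dD (Suc j) (phi (Suc j) x) = phi j (dC (Suc j) x)) \<Longrightarrow>
   chain_map BC dC BD dD phi"
  unfolding chain_map_def
  apply (intro conjI allI impI ballI)
   apply blast
  subgoal for j x by (cases j) auto
  done

lemma decomp: "y = y(e := 0) + smult_vec (y e) (basis_vec e)"
  by (simp add: fun_eq_iff smult_vec_def basis_vec_def)

theorem theorem2p5:
  fixes I \<aa> :: "('v::finite, 'k::field) poly_ring set"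
    and BF :: "nat \<Rightarrow> 'b set" and dgF :: "nat \<Rightarrow> 'b \<Rightarrow> int"
    and d :: "nat \<Rightarrow> ('b \<Rightarrow> ('v, 'k) poly_ring) \<Rightarrow> ('b \<Rightarrow> ('v, 'k) poly_ring)"
    and zF e0 :: 'b
    and BG :: "nat \<Rightarrow> 'c set" and dgG :: "nat \<Rightarrow> 'c \<Rightarrow> int"
    and m :: "nat \<Rightarrow> ('c \<Rightarrow> ('v, 'k) poly_ring) \<Rightarrow> ('c \<Rightarrow> ('v, 'k) poly_ring)"
    and zG :: 'c
    and q :: "nat \<Rightarrow> ('b \<Rightarrow> ('v, 'k) poly_ring) \<Rightarrow> ('c \<Rightarrow> ('v, 'k) poly_ring)"
    and J :: "('v, 'k) poly_ring set"
  assumes I_homog: "homog_ideal I"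
    and F_res: "homog_free_res_quot I BF dgF d"
    and F0: "BF 0 = {zF}"
    and e0: "e0 \<in> BF 1"
    and a_homog: "homog_ideal \<aa>"
    and d0_in_a: "\<forall>x\<in>fmod (BF 2). d 2 x e0 \<in> \<aa>"
    and G_res: "homog_free_res_quot \<aa> BG dgG m"
    and G0: "BG 0 = {zG}"
    and q1_lin: "lin_map (BF 2) (BG 1) (q 1)"
    and qk_lin: "\<forall>k\<ge>2. lin_map (BF (Suc k)) (BG k) (q k)"
    and q1: "\<forall>x\<in>fmod (BF 2). m 1 (q 1 x) = (\<lambda>w. if w = zG then d 2 x e0 else 0)"
    and qk: "\<forall>k\<ge>2. \<forall>x\<in>fmod (BF (Suc k)). m k (q k x) = q (k - 1) (d (Suc k) x)"
    and J_def: "J = ideal_sum ((\<lambda>x. d 1 x zF) ` fmod (BF 1 - {e0}))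
                      (ideal_prod \<aa> (ideal_gen {d 1 (basis_vec e0) zF}))"
  shows "chain_map (T_basis BF e0) (T_diff d e0) BG (B_diff d e0 zF m) (TB_map d zF zG q)
       \<and> free_res_quot J (cone_basis (T_basis BF e0) BG)
           (cone_diff (T_diff d e0) (B_diff d e0 zF m) (TB_map d zF zG q))"
proof -
  have cF: "is_complex BF d" and exF: "\<And>j. j \<ge> 1 \<Longrightarrow> exact_at BF d j"
    using F_res by (auto simp: homog_free_res_quot_def free_res_quot_def)
  have cG: "is_complex BG m" and exG: "\<And>j. j \<ge> 1 \<Longrightarrow> exact_at BG m j"
    using G_res by (auto simp: homog_free_res_quot_def free_res_quot_def)
  have imgG: "(\<lambda>x. m (Suc 0) x zG) ` fmod (BG (Suc 0)) = \<aa>"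
    using G_res G0 by (auto simp: homog_free_res_quot_def free_res_quot_def)
  have aI: "is_ideal \<aa>" using a_homog by (simp add: homog_ideal_def)
  have aneg: "\<And>a. a \<in> \<aa> \<Longrightarrow> - a \<in> \<aa>"
    using aI unfolding is_ideal_def by (metis mult_minus1)
  define c where "c = d 1 (basis_vec e0) zF"
  note ldS = cx_lin[OF cF] and lmS = cx_lin[OF cG]
  have q1': "\<And>x. x \<in> fmod (BF (Suc (Suc 0))) \<Longrightarrow> m (Suc 0) (q (Suc 0) x) = (\<lambda>w. if w = zG then d (Suc (Suc 0)) x e0 else 0)"
    using q1 unfolding numeral_2_eq_2 by simp
  have qk': "\<And>k x. x \<in> fmod (BF (Suc (Suc (Suc k)))) \<Longrightarrow> m (Suc (Suc k)) (q (Suc (Suc k)) x) = q (Suc k) (d (Suc (Suc (Suc k))) x)"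
    using qk by auto
  have lq1: "lin_map (BF (Suc (Suc 0))) (BG (Suc 0)) (q (Suc 0))"
    using q1_lin unfolding numeral_2_eq_2 by simp
  have lqk: "\<And>k. lin_map (BF (Suc (Suc (Suc k)))) (BG (Suc (Suc k))) (q (Suc (Suc k)))"
    using qk_lin by auto
  have TB0: "T_basis BF e0 0 = BF (Suc 0) - {e0}" and TBS: "\<And>j. T_basis BF e0 (Suc j) = BF (Suc (Suc j))"
    by (simp_all add: T_basis_def)
  have TD1: "T_diff d e0 (Suc 0) = (\<lambda>x. (d (Suc (Suc 0)) x)(e0 := 0))"
    and TDS: "\<And>j. T_diff d e0 (Suc (Suc j)) = d (Suc (Suc (Suc j)))"
    by (simp_all add: T_diff_def fun_eq_iff numeral_2_eq_2)
  have BD1: "B_diff d e0 zF m (Suc 0) = (\<lambda>g w. - (m (Suc 0) g w * c))"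
    and BDS: "\<And>j. B_diff d e0 zF m (Suc (Suc j)) = m (Suc (Suc j))"
    by (simp_all add: B_diff_def fun_eq_iff c_def)
  have PH0: "TB_map d zF zG q 0 = (\<lambda>x w. if w = zG then d (Suc 0) x zF else 0)"
    and PHS: "\<And>j. TB_map d zF zG q (Suc j) = q (Suc j)"
    by (simp_all add: TB_map_def fun_eq_iff)
  have e0F: "basis_vec e0 \<in> fmod (BF (Suc 0))" using e0 basis_vec_fmod by simp
  have c_eq: "c = d (Suc 0) (basis_vec e0) zF" by (simp add: c_def)
  have F0z: "BF 0 = {zF}" using F0 .

  have Tc: "is_complex (T_basis BF e0) (T_diff d e0)"
  proof (rule is_complexI)
    fix j show "lin_map (T_basis BF e0 (Suc j)) (T_basis BF e0 j) (T_diff d e0 (Suc j))"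
    proof (cases j)
      case 0 then show ?thesis using lin_upd[OF ldS[of "Suc 0"], of e0] by (simp add: TB0 TBS TD1)
    next
      case (Suc j') then show ?thesis using ldS[of "Suc (Suc j')"] by (simp add: TBS TDS)
    qed
  next
    fix j and x :: "'b \<Rightarrow> ('v, 'k) poly_ring" assume x: "x \<in> fmod (T_basis BF e0 (Suc (Suc j)))"
    show "T_diff d e0 (Suc j) (T_diff d e0 (Suc (Suc j)) x) = 0"
    proof (cases j)
      case 0 then show ?thesis using cx_sq[OF cF, of x "Suc 0"] x by (simp add: TBS TD1 TDS fun_eq_iff)
    next
      case (Suc j') then show ?thesis using cx_sq[OF cF, of x "Suc (Suc j')"] x by (simp add: TBS TDS)
    qed
  qed

  have Bc: "is_complex BG (B_diff d e0 zF m)"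
  proof (rule is_complexI)
    fix j show "lin_map (BG (Suc j)) (BG j) (B_diff d e0 zF m (Suc j))"
    proof (cases j)
      case 0 then show ?thesis using lin_scale[OF lmS[of 0], of c] by (simp add: BD1)
    next
      case (Suc j') then show ?thesis using lmS[of "Suc j'"] by (simp add: BDS)
    qed
  next
    fix j and x :: "'c \<Rightarrow> ('v, 'k) poly_ring" assume x: "x \<in> fmod (BG (Suc (Suc j)))"
    show "B_diff d e0 zF m (Suc j) (B_diff d e0 zF m (Suc (Suc j)) x) = 0"
    proof (cases j)
      case 0 then show ?thesis using cx_sq[OF cG, of x 0] x by (simp add: BD1 BDS fun_eq_iff)
    next
      case (Suc j') then show ?thesis using cx_sq[OF cG, of x "Suc j'"] x by (simp add: BDS)
    qed
  qed

  have CH: "chain_map (T_basis BF e0) (T_diff d e0) BG (B_diff d e0 zF m) (TB_map d zF zG q)"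
  proof (rule chain_mapI)
    fix j show "lin_map (T_basis BF e0 j) (BG j) (TB_map d zF zG q j)"
    proof (cases j)
      case 0
      have "lin_map (BF (Suc 0) - {e0}) (BF 0) (d (Suc 0))" using lin_mono[OF ldS[of 0]] by blast
      from lin_eval[OF this, of zG zF] show ?thesis using 0 G0 by (simp add: TB0 PH0)
    next
      case (Suc j')
      then show ?thesis
      proof (cases j')
        case 0 then show ?thesis using lq1 Suc by (simp add: TBS PHS)
      next
        case (Suc k) then show ?thesis using lqk[of k] \<open>j = Suc j'\<close> by (simp add: TBS PHS)
      qed
    qed
  next
    fix j and x :: "'b \<Rightarrow> ('v, 'k) poly_ring" assume x: "x \<in> fmod (T_basis BF e0 (Suc j))"
    show "B_diff d e0 zF m (Suc j) (TB_map d zF zG q (Suc j) x) = TB_map d zF zG q j (T_diff d e0 (Suc j) x)"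
    proof (cases j)
      case 0
      have xF: "x \<in> fmod (BF (Suc (Suc 0)))" using x 0 by (simp add: TBS)
      define y where "y = d (Suc (Suc 0)) x"
      have yF: "y \<in> fmod (BF (Suc 0))" using lin_in[OF ldS xF] y_def by simp
      have y0: "d (Suc 0) y = 0" using cx_sq[OF cF xF] y_def by simp
      have y'F: "y(e0 := 0) \<in> fmod (BF (Suc 0))"
        by (rule fmod_subsupp[OF _ _ yF]) (auto simp: fmod_out[OF yF])
      have "d (Suc 0) y = d (Suc 0) (y(e0 := 0)) + smult_vec (y e0) (d (Suc 0) (basis_vec e0))"
        using lin_add[OF ldS y'F fmod_smult[OF e0F]] lin_smult[OF ldS e0F] decomp[of y e0] by metis
      then have "d (Suc 0) (y(e0 := 0)) zF = - (y e0 * c)"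
        using y0 by (auto simp: fun_eq_iff smult_vec_def c_eq add_eq_0_iff)
      then show ?thesis using 0 q1'[OF xF]
        by (auto simp: BD1 PH0 PHS TD1 fun_eq_iff y_def)
    next
      case (Suc k)
      have xF: "x \<in> fmod (BF (Suc (Suc (Suc k))))" using x Suc by (simp add: TBS)
      show ?thesis using qk'[OF xF] Suc by (simp add: BDS PHS TDS)
    qed
  qed

  have CC: "is_complex (cone_basis (T_basis BF e0) BG) (cone_diff (T_diff d e0) (B_diff d e0 zF m) (TB_map d zF zG q))"
    using cone_complex[OF Tc Bc CH] .

  have H0: "\<exists>t'\<in>fmod (T_basis BF e0 (Suc 0)). \<exists>b'\<in>fmod (BG (Suc (Suc 0))).
         - T_diff d e0 (Suc 0) t' = t \<and> TB_map d zF zG q (Suc 0) t' + B_diff d e0 zF m (Suc (Suc 0)) b' = b"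
    if t: "t \<in> fmod (T_basis BF e0 0)" and b: "b \<in> fmod (BG (Suc 0))"
      and z: "TB_map d zF zG q 0 t + B_diff d e0 zF m (Suc 0) b = 0" for t b
  proof -
    have e: "d (Suc 0) t zF + - (m (Suc 0) b zG * c) = 0"
      using fun_cong[OF z, of zG] by (simp add: PH0 BD1)
    define a where "a = m (Suc 0) b zG"
    have t1: "t \<in> fmod (BF (Suc 0) - {e0})" using t by (simp add: TB0)
    have tF: "t \<in> fmod (BF (Suc 0))" using fmod_mono[OF _ t1] by blast
    have te0: "t e0 = 0" using fmod_out[OF t1] by simp
    define v where "v = t - smult_vec a (basis_vec e0)"
    have vF: "v \<in> fmod (BF (Suc 0))" unfolding v_def by (rule fmod_diff[OF tF fmod_smult[OF e0F]])
    have dv: "d (Suc 0) v = d (Suc 0) t - smult_vec a (d (Suc 0) (basis_vec e0))"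
      unfolding v_def using lin_diff[OF ldS tF fmod_smult[OF e0F]] lin_smult[OF ldS e0F] by simp
    have dvF: "d (Suc 0) v \<in> fmod {zF}" using lin_in[OF ldS vF] F0 by simp
    have "d (Suc 0) v zF = 0" using e by (simp add: dv smult_vec_def c_eq a_def)
    then have dv0: "d (Suc 0) v = 0" using fmod_single_eq0[OF dvF] by simp
    obtain s where sF: "s \<in> fmod (BF (Suc (Suc 0)))" and vs: "v = d (Suc (Suc 0)) s"
      using exact_obtain[OF exF vF dv0] by auto
    have A: "- T_diff d e0 (Suc 0) (- s) = t"
    proof -
      have "d (Suc (Suc 0)) (- s) = - v" using lin_uminus[OF ldS sF] vs by simp
      then show ?thesis using te0
        by (auto simp: TD1 fun_eq_iff v_def smult_vec_def basis_vec_def)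
    qed
    define g where "g = b + q (Suc 0) s"
    have qsF: "q (Suc 0) s \<in> fmod (BG (Suc 0))" using lin_in[OF lq1 sF] .
    have gF: "g \<in> fmod (BG (Suc 0))" unfolding g_def by (rule fmod_add[OF b qsF])
    have s_e0: "d (Suc (Suc 0)) s e0 = - a"
      using vs[symmetric] te0 by (simp add: v_def smult_vec_def basis_vec_def)
    have mg: "m (Suc 0) g = m (Suc 0) b + (\<lambda>w. if w = zG then - a else 0)"
      unfolding g_def lin_add[OF lmS b qsF] q1'[OF sF] s_e0 ..
    have mgF: "m (Suc 0) g \<in> fmod {zG}" using lin_in[OF lmS gF] G0 by simp
    have "m (Suc 0) g zG = 0" using mg by (simp add: a_def)
    then have mg0: "m (Suc 0) g = 0" using fmod_single_eq0[OF mgF] by simp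
    obtain b' where b'F: "b' \<in> fmod (BG (Suc (Suc 0)))" and gb: "g = m (Suc (Suc 0)) b'"
      using exact_obtain[OF exG gF mg0] by auto
    have B: "TB_map d zF zG q (Suc 0) (- s) + B_diff d e0 zF m (Suc (Suc 0)) b' = b"
      using lin_uminus[OF lq1 sF] gb[symmetric] by (simp add: PHS BDS g_def)
    have "- s \<in> fmod (T_basis BF e0 (Suc 0))" using fmod_uminus[OF sF] by (simp add: TBS)
    then show ?thesis using A B b'F by blast
  qed

  have HS: "\<exists>t'\<in>fmod (T_basis BF e0 (Suc (Suc k))). \<exists>b'\<in>fmod (BG (Suc (Suc (Suc k)))).
         - T_diff d e0 (Suc (Suc k)) t' = t \<and> TB_map d zF zG q (Suc (Suc k)) t' + B_diff d e0 zF m (Suc (Suc (Suc k))) b' = b"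
    if t: "t \<in> fmod (T_basis BF e0 (Suc k))" and b: "b \<in> fmod (BG (Suc (Suc k)))"
      and zT: "T_diff d e0 (Suc k) t = 0"
      and z: "TB_map d zF zG q (Suc k) t + B_diff d e0 zF m (Suc (Suc k)) b = 0" for k t b
  proof -
    have tF: "t \<in> fmod (BF (Suc (Suc k)))" using t by (simp add: TBS)
    have z': "q (Suc k) t + m (Suc (Suc k)) b = 0" using z by (simp add: PHS BDS)
    have dt: "d (Suc (Suc k)) t = 0"
    proof (cases k)
      case 0
      have tF2: "t \<in> fmod (BF (Suc (Suc 0)))" using tF 0 by simp
      have "q (Suc 0) t = - m (Suc (Suc 0)) b" using z' 0 by (simp add: eq_neg_iff_add_eq_0)
      then have "m (Suc 0) (q (Suc 0) t) = - m (Suc 0) (m (Suc (Suc 0)) b)"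
        using lin_uminus[OF lmS lin_in[OF lmS b]] 0 by simp
      also have "\<dots> = 0" using cx_sq[OF cG, of b 0] b 0 by simp
      finally have "d (Suc (Suc 0)) t e0 = 0" using fun_cong[OF q1'[OF tF2], of zG] by simp
      then show ?thesis using zT 0 by (auto simp: TD1 fun_eq_iff split: if_splits)
    next
      case (Suc k') then show ?thesis using zT by (simp add: TDS)
    qed
    obtain s where sF: "s \<in> fmod (BF (Suc (Suc (Suc k))))" and ts: "t = d (Suc (Suc (Suc k))) s"
      using exact_obtain[OF exF tF dt] by auto
    have A: "- T_diff d e0 (Suc (Suc k)) (- s) = t"
      using lin_uminus[OF ldS sF] ts by (simp add: TDS)
    define g where "g = b + q (Suc (Suc k)) s"
    have qsF: "q (Suc (Suc k)) s \<in> fmod (BG (Suc (Suc k)))" using lin_in[OF lqk sF] .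
    have gF: "g \<in> fmod (BG (Suc (Suc k)))" unfolding g_def by (rule fmod_add[OF b qsF])
    have "m (Suc (Suc k)) g = m (Suc (Suc k)) b + q (Suc k) t"
      unfolding g_def using lin_add[OF lmS b qsF] qk'[OF sF] ts by simp
    then have mg0: "m (Suc (Suc k)) g = 0" using z' by (simp add: add.commute)
    obtain b' where b'F: "b' \<in> fmod (BG (Suc (Suc (Suc k))))" and gb: "g = m (Suc (Suc (Suc k))) b'"
      using exact_obtain[OF exG gF mg0] by auto
    have B: "TB_map d zF zG q (Suc (Suc k)) (- s) + B_diff d e0 zF m (Suc (Suc (Suc k))) b' = b"
      using lin_uminus[OF lqk sF] gb[symmetric] by (simp add: PHS BDS g_def)
    have "- s \<in> fmod (T_basis BF e0 (Suc (Suc k)))" using fmod_uminus[OF sF] by (simp add: TBS)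
    then show ?thesis using A B b'F by blast
  qed

  have EX: "exact_at (cone_basis (T_basis BF e0) BG) (cone_diff (T_diff d e0) (B_diff d e0 zF m) (TB_map d zF zG q)) j"
    if "j \<ge> 1" for j
  proof -
    obtain i where j: "j = Suc i" using \<open>j \<ge> 1\<close> by (cases j) auto
    show ?thesis unfolding j
    proof (rule cone_exact[OF CC])
      fix t b assume h: "t \<in> fmod (T_basis BF e0 i)" "b \<in> fmod (BG (Suc i))" "1 \<le> i \<longrightarrow> T_diff d e0 i t = 0"
        "TB_map d zF zG q i t + B_diff d e0 zF m (Suc i) b = 0"
      show "\<exists>t'\<in>fmod (T_basis BF e0 (Suc i)). \<exists>b'\<in>fmod (BG (Suc (Suc i))).
         - T_diff d e0 (Suc i) t' = t \<and> TB_map d zF zG q (Suc i) t' + B_diff d e0 zF m (Suc (Suc i)) b' = b"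
      proof (cases i)
        case 0 then show ?thesis using H0[of t b] h by simp
      next
        case (Suc k) then show ?thesis using HS[of t k b] h by simp
      qed
    qed
  qed

  have Jeq: "J = {k + a * c | k a. k \<in> (\<lambda>x. d (Suc 0) x zF) ` fmod (BF (Suc 0) - {e0}) \<and> a \<in> \<aa>}"
    unfolding J_def ideal_prod_single[OF aI] c_def ideal_sum_def by auto
  have IM: "(\<lambda>x. cone_diff (T_diff d e0) (B_diff d e0 zF m) (TB_map d zF zG q) 1 x (Inr zG))
       ` fmod (cone_basis (T_basis BF e0) BG 1) = J"
  proof -
    have val: "cone_diff (T_diff d e0) (B_diff d e0 zF m) (TB_map d zF zG q) 1 x (Inr zG)
       = d (Suc 0) (x \<circ> Inl) zF + - (m (Suc 0) (x \<circ> Inr) zG) * c" for x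
      by (simp add: cone_diff_def PH0 BD1)
    have mem: "x \<in> fmod (cone_basis (T_basis BF e0) BG 1) \<longleftrightarrow>
        x \<circ> Inl \<in> fmod (BF (Suc 0) - {e0}) \<and> x \<circ> Inr \<in> fmod (BG (Suc 0))" for x
      using cone_fmod[of x "T_basis BF e0" BG 0] by (simp add: TB0)
    show ?thesis
    proof
      show "(\<lambda>x. cone_diff (T_diff d e0) (B_diff d e0 zF m) (TB_map d zF zG q) 1 x (Inr zG))
       ` fmod (cone_basis (T_basis BF e0) BG 1) \<subseteq> J"
      proof
        fix y assume "y \<in> (\<lambda>x. cone_diff (T_diff d e0) (B_diff d e0 zF m) (TB_map d zF zG q) 1 x (Inr zG))
          ` fmod (cone_basis (T_basis BF e0) BG 1)"
        then obtain x where x: "x \<in> fmod (cone_basis (T_basis BF e0) BG 1)"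
          and y: "y = d (Suc 0) (x \<circ> Inl) zF + - (m (Suc 0) (x \<circ> Inr) zG) * c" using val by auto
        have "m (Suc 0) (x \<circ> Inr) zG \<in> \<aa>" using imgG mem x by blast
        then have "- (m (Suc 0) (x \<circ> Inr) zG) \<in> \<aa>" by (rule aneg)
        moreover have "d (Suc 0) (x \<circ> Inl) zF \<in> (\<lambda>x. d (Suc 0) x zF) ` fmod (BF (Suc 0) - {e0})"
          using mem x by blast
        ultimately show "y \<in> J" unfolding Jeq y by blast
      qed
    next
      show "J \<subseteq> (\<lambda>x. cone_diff (T_diff d e0) (B_diff d e0 zF m) (TB_map d zF zG q) 1 x (Inr zG))
       ` fmod (cone_basis (T_basis BF e0) BG 1)"
      proof
        fix y assume "y \<in> J"
        then obtain t a where t: "t \<in> fmod (BF (Suc 0) - {e0})" and a: "a \<in> \<aa>"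
          and y: "y = d (Suc 0) t zF + a * c" unfolding Jeq by blast
        obtain b where b: "b \<in> fmod (BG (Suc 0))" and mb: "m (Suc 0) b zG = - a"
          using aneg[OF a] imgG by (metis (no_types, lifting) imageE)
        have "vjoin t b \<in> fmod (cone_basis (T_basis BF e0) BG 1)" using mem[of "vjoin t b"] t b by simp
        moreover have "y = cone_diff (T_diff d e0) (B_diff d e0 zF m) (TB_map d zF zG q) 1 (vjoin t b) (Inr zG)"
          unfolding val using y mb by simp
        ultimately show "y \<in> (\<lambda>x. cone_diff (T_diff d e0) (B_diff d e0 zF m) (TB_map d zF zG q) 1 x (Inr zG))
       ` fmod (cone_basis (T_basis BF e0) BG 1)" by blast
      qed
    qed
  qed

  have CB0: "cone_basis (T_basis BF e0) BG 0 = {Inr zG}" by (simp add: cone_basis_def G0)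
  show ?thesis
    unfolding free_res_quot_def
    using CH CC EX IM CB0 by blast
qed

end
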